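(* Let $\nu\ge0$, $\epsilon\in\{0,1\}$, $\zeta$ real with $K:=1+\zeta\nu^2\neq0$, $s:=\zeta+\sqrt\nu$, and write $E=\exp(3\delta/(2K))$. Consider the system for functions $U,m,\gamma,\delta,\beta$ of $(X,T)$: $$m=\nu^2U_{XX}-\epsilon U,\qquad m_T=-m_XU-2mU_X+\tfrac23(1-\nu^{5/2})U_{XXX},$$ $$\gamma_X=-\frac{3}{4K}\gamma^2+m+\tfrac13\epsilon s,\qquad \gamma_T=\Big[\tfrac23K U_X-\tfrac23 s\gamma-\gamma U\Big]_X,$$ $$\delta_X=\gamma,\qquad \delta_T=\tfrac23KU_X-\tfrac23s\gamma-U\gamma,$$ $$\beta_X=\big[\nu^2m+\tfrac13\epsilon(\nu^{5/2}-1)\big]E,$$ $$\beta_T=\Big[-\tfrac13(\nu^{5/2}-1)(2m+\epsilon U)-\tfrac12\gamma^2+\tfrac29\epsilon(2\zeta+\zeta^2\nu^2-\nu^3+2\sqrt\nu)-\nu^2Um\Big]E,$$ whose equations are mutually compatible. Define $$Q_U=\gamma E,\quad Q_m=\Big[\nu^2m_X+\frac{3\nu^2\gamma}{K}m+\gamma\epsilon\frac{\nu^{5/2}-1}{K}\Big]E,\quad Q_\gamma=\big[\nu^2m+\tfrac13\epsilon(\nu^{5/2}-1)\big]E,$$ $$Q_\delta=\beta,\qquad Q_\beta=\nu^2\big[\nu^2m+\tfrac13\epsilon(\nu^{5/2}-1)\big]E^2+\frac{3}{4K}\beta^2 .$$ Then the evolutionary vector field $W=Q_U\partial_U+Q_m\partial_m+Q_\gamma\partial_\gamma+Q_\delta\partial_\delta+Q_\beta\partial_\beta$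 is a symmetry of the system: for every smooth solution $(U,m,\gamma,\delta,\beta)$, the deformed tuple $(U+\tau Q_U,\,m+\tau Q_m,\,\gamma+\tau Q_\gamma,\,\delta+\tau Q_\delta,\,\beta+\tau Q_\beta)$ (with the $Q$'s evaluated on the solution) satisfies all equations of the system up to terms of order $\tau^2$. *)

theory Defs
  imports "HOL-Analysis.Analysis" "HOL-Library.Landau_Symbols"
begin

definition dX :: "(real \<Rightarrow> real \<Rightarrow> real) \<Rightarrow> real \<Rightarrow> real \<Rightarrow> real" where
  "dX f = (\<lambda>x t. deriv (\<lambda>y. f y t) x)"

definition dT :: "(real \<Rightarrow> real \<Rightarrow> real) \<Rightarrow> real \<Rightarrow> real \<Rightarrow> real" where
  "dT f = (\<lambda>x t. deriv (\<lambda>y. f x y) t)"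

text \<open>Smoothness (C-infinity on the plane): all iterated partial derivatives exist
  everywhere and are continuous.\<close>

coinductive smooth2 :: "(real \<Rightarrow> real \<Rightarrow> real) \<Rightarrow> bool" where
  "continuous_on UNIV (\<lambda>p. f (fst p) (snd p)) \<Longrightarrow>
   (\<forall>x t. (\<lambda>y. f y t) differentiable (at x)) \<Longrightarrow>
   (\<forall>x t. (\<lambda>y. f x y) differentiable (at t)) \<Longrightarrow>
   smooth2 (dX f) \<Longrightarrow> smooth2 (dT f) \<Longrightarrow> smooth2 f"

definition residuals ::
  "real \<Rightarrow> real \<Rightarrow> real \<Rightarrow> (real \<Rightarrow> real \<Rightarrow> real) \<Rightarrow> (real \<Rightarrow> real \<Rightarrow> real) \<Rightarrow>
   (real \<Rightarrow> real \<Rightarrow> real) \<Rightarrow> (real \<Rightarrow> real \<Rightarrow> real) \<Rightarrow> (real \<Rightarrow> real \<Rightarrow> real) \<Rightarrow>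
   real \<Rightarrow> real \<Rightarrow> real list" where
  "residuals \<nu> \<epsilon> \<zeta> U m g d b X T =
    (let K = 1 + \<zeta> * \<nu>^2; s = \<zeta> + sqrt \<nu>; c = \<nu> powr (5/2);
         E = exp (3 * d X T / (2 * K)) in
    [ m X T - (\<nu>^2 * dX (dX U) X T - \<epsilon> * U X T),
      dT m X T - (- dX m X T * U X T - 2 * m X T * dX U X T
                   + 2/3 * (1 - c) * dX (dX (dX U)) X T),
      dX g X T - (- 3 / (4 * K) * (g X T)^2 + m X T + 1/3 * \<epsilon> * s),
      dT g X T - dX (\<lambda>x t. 2/3 * K * dX U x t - 2/3 * s * g x t - g x t * U x t) X T,
      dX d X T - g X T,
      dT d X T - (2/3 * K * dX U X T - 2/3 * s * g X T - U X T * g X T),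
      dX b X T - (\<nu>^2 * m X T + 1/3 * \<epsilon> * (c - 1)) * E,
      dT b X T - (- 1/3 * (c - 1) * (2 * m X T + \<epsilon> * U X T) - 1/2 * (g X T)^2
                   + 2/9 * \<epsilon> * (2 * \<zeta> + \<zeta>^2 * \<nu>^2 - \<nu>^3 + 2 * sqrt \<nu>)
                   - \<nu>^2 * U X T * m X T) * E ])"

definition is_solution ::
  "real \<Rightarrow> real \<Rightarrow> real \<Rightarrow> (real \<Rightarrow> real \<Rightarrow> real) \<Rightarrow> (real \<Rightarrow> real \<Rightarrow> real) \<Rightarrow>
   (real \<Rightarrow> real \<Rightarrow> real) \<Rightarrow> (real \<Rightarrow> real \<Rightarrow> real) \<Rightarrow> (real \<Rightarrow> real \<Rightarrow> real) \<Rightarrow> bool" where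
  "is_solution \<nu> \<epsilon> \<zeta> U m g d b \<longleftrightarrow>
     (\<forall>X T. \<forall>r \<in> set (residuals \<nu> \<epsilon> \<zeta> U m g d b X T). r = 0)"

definition QU :: "real \<Rightarrow> real \<Rightarrow> real \<Rightarrow> (real \<Rightarrow> real \<Rightarrow> real) \<Rightarrow> (real \<Rightarrow> real \<Rightarrow> real) \<Rightarrow>
   (real \<Rightarrow> real \<Rightarrow> real) \<Rightarrow> (real \<Rightarrow> real \<Rightarrow> real) \<Rightarrow> (real \<Rightarrow> real \<Rightarrow> real) \<Rightarrow> real \<Rightarrow> real \<Rightarrow> real" where
  "QU \<nu> \<epsilon> \<zeta> U m g d b = (\<lambda>X T. g X T * exp (3 * d X T / (2 * (1 + \<zeta> * \<nu>^2))))"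

definition Qm :: "real \<Rightarrow> real \<Rightarrow> real \<Rightarrow> (real \<Rightarrow> real \<Rightarrow> real) \<Rightarrow> (real \<Rightarrow> real \<Rightarrow> real) \<Rightarrow>
   (real \<Rightarrow> real \<Rightarrow> real) \<Rightarrow> (real \<Rightarrow> real \<Rightarrow> real) \<Rightarrow> (real \<Rightarrow> real \<Rightarrow> real) \<Rightarrow> real \<Rightarrow> real \<Rightarrow> real" where
  "Qm \<nu> \<epsilon> \<zeta> U m g d b = (\<lambda>X T. let K = 1 + \<zeta> * \<nu>^2 in
     (\<nu>^2 * dX m X T + 3 * \<nu>^2 * g X T / K * m X T + g X T * \<epsilon> * (\<nu> powr (5/2) - 1) / K)
     * exp (3 * d X T / (2 * K)))"

definition Qg :: "real \<Rightarrow> real \<Rightarrow> real \<Rightarrow> (real \<Rightarrow> real \<Rightarrow> real) \<Rightarrow> (real \<Rightarrow> real \<Rightarrow> real) \<Rightarrow>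
   (real \<Rightarrow> real \<Rightarrow> real) \<Rightarrow> (real \<Rightarrow> real \<Rightarrow> real) \<Rightarrow> (real \<Rightarrow> real \<Rightarrow> real) \<Rightarrow> real \<Rightarrow> real \<Rightarrow> real" where
  "Qg \<nu> \<epsilon> \<zeta> U m g d b = (\<lambda>X T.
     (\<nu>^2 * m X T + 1/3 * \<epsilon> * (\<nu> powr (5/2) - 1)) * exp (3 * d X T / (2 * (1 + \<zeta> * \<nu>^2))))"

definition Qd :: "real \<Rightarrow> real \<Rightarrow> real \<Rightarrow> (real \<Rightarrow> real \<Rightarrow> real) \<Rightarrow> (real \<Rightarrow> real \<Rightarrow> real) \<Rightarrow>
   (real \<Rightarrow> real \<Rightarrow> real) \<Rightarrow> (real \<Rightarrow> real \<Rightarrow> real) \<Rightarrow> (real \<Rightarrow> real \<Rightarrow> real) \<Rightarrow> real \<Rightarrow> real \<Rightarrow> real" where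
  "Qd \<nu> \<epsilon> \<zeta> U m g d b = b"

definition Qb :: "real \<Rightarrow> real \<Rightarrow> real \<Rightarrow> (real \<Rightarrow> real \<Rightarrow> real) \<Rightarrow> (real \<Rightarrow> real \<Rightarrow> real) \<Rightarrow>
   (real \<Rightarrow> real \<Rightarrow> real) \<Rightarrow> (real \<Rightarrow> real \<Rightarrow> real) \<Rightarrow> (real \<Rightarrow> real \<Rightarrow> real) \<Rightarrow> real \<Rightarrow> real \<Rightarrow> real" where
  "Qb \<nu> \<epsilon> \<zeta> U m g d b = (\<lambda>X T. let K = 1 + \<zeta> * \<nu>^2 in
     \<nu>^2 * (\<nu>^2 * m X T + 1/3 * \<epsilon> * (\<nu> powr (5/2) - 1)) * (exp (3 * d X T / (2 * K)))^2
     + 3 / (4 * K) * (b X T)^2)"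

end

theory Submission
  imports Defs
begin


lemma fd_iff: "(f::real\<Rightarrow>real) differentiable (at x) \<longleftrightarrow> f field_differentiable (at x)"
  by (simp add: real_differentiable_def field_differentiable_def)

definition DX :: "(real \<Rightarrow> real \<Rightarrow> real) \<Rightarrow> bool" where "DX f \<longleftrightarrow> (\<forall>x t. (\<lambda>y. f y t) field_differentiable at x)"
definition DT :: "(real \<Rightarrow> real \<Rightarrow> real) \<Rightarrow> bool" where "DT f \<longleftrightarrow> (\<forall>x t. (\<lambda>y. f x y) field_differentiable at t)"

lemma DX_const: "DX (\<lambda>x t. c)" by (simp add: DX_def)
lemma DT_const: "DT (\<lambda>x t. c)" by (simp add: DT_def)

lemma DX_add: "DX f \<Longrightarrow> DX g \<Longrightarrow> DX (\<lambda>x t. f x t + g x t)"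
  unfolding DX_def by (auto intro: field_differentiable_add)
lemma DT_add: "DT f \<Longrightarrow> DT g \<Longrightarrow> DT (\<lambda>x t. f x t + g x t)"
  unfolding DT_def by (auto intro: field_differentiable_add)
lemma DX_mult: "DX f \<Longrightarrow> DX g \<Longrightarrow> DX (\<lambda>x t. f x t * g x t)"
  unfolding DX_def by (auto intro: field_differentiable_mult)
lemma DT_mult: "DT f \<Longrightarrow> DT g \<Longrightarrow> DT (\<lambda>x t. f x t * g x t)"
  unfolding DT_def by (auto intro: field_differentiable_mult)
lemma fd_exp: "(f::real\<Rightarrow>real) field_differentiable at x \<Longrightarrow> (\<lambda>y. exp (f y)) field_differentiable at x"
  unfolding field_differentiable_def using DERIV_exp[THEN DERIV_chain2] by blast
lemma deriv_exp_g: "(f::real\<Rightarrow>real) field_differentiable at x \<Longrightarrow> deriv (\<lambda>y. exp (f y)) x = exp (f x) * deriv f x"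
  by (rule DERIV_imp_deriv, rule DERIV_exp[THEN DERIV_chain2]) (simp add: DERIV_deriv_iff_field_differentiable)
lemma DX_exp: "DX f \<Longrightarrow> DX (\<lambda>x t. exp (f x t))"
  unfolding DX_def by (simp add: fd_exp)
lemma DT_exp: "DT f \<Longrightarrow> DT (\<lambda>x t. exp (f x t))"
  unfolding DT_def by (simp add: fd_exp)

lemma dX_const_g: "dX (\<lambda>x t. c) = (\<lambda>x t. 0)" by (simp add: dX_def)
lemma dT_const_g: "dT (\<lambda>x t. c) = (\<lambda>x t. 0)" by (simp add: dT_def)
lemma dX_add_g: "DX f \<Longrightarrow> DX g \<Longrightarrow> dX (\<lambda>x t. f x t + g x t) = (\<lambda>x t. dX f x t + dX g x t)"
  unfolding DX_def dX_def by (auto intro!: ext)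
lemma dT_add_g: "DT f \<Longrightarrow> DT g \<Longrightarrow> dT (\<lambda>x t. f x t + g x t) = (\<lambda>x t. dT f x t + dT g x t)"
  unfolding DT_def dT_def by (auto intro!: ext)
lemma dX_mult_g: "DX f \<Longrightarrow> DX g \<Longrightarrow> dX (\<lambda>x t. f x t * g x t) = (\<lambda>x t. dX f x t * g x t + f x t * dX g x t)"
  unfolding DX_def dX_def by (auto intro!: ext)
lemma dT_mult_g: "DT f \<Longrightarrow> DT g \<Longrightarrow> dT (\<lambda>x t. f x t * g x t) = (\<lambda>x t. dT f x t * g x t + f x t * dT g x t)"
  unfolding DT_def dT_def by (auto intro!: ext)
lemma dX_exp_g: "DX f \<Longrightarrow> dX (\<lambda>x t. exp (f x t)) = (\<lambda>x t. exp (f x t) * dX f x t)"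
  unfolding DX_def dX_def
  by (auto intro!: ext simp: deriv_exp_g)
lemma dT_exp_g: "DT f \<Longrightarrow> dT (\<lambda>x t. exp (f x t)) = (\<lambda>x t. exp (f x t) * dT f x t)"
  unfolding DT_def dT_def
  by (auto intro!: ext simp: deriv_exp_g)

inductive cl :: "(real \<Rightarrow> real \<Rightarrow> real) \<Rightarrow> bool" where
  base: "smooth2 f \<Longrightarrow> cl f"
| const: "cl (\<lambda>x t. c)"
| add: "cl f \<Longrightarrow> cl g \<Longrightarrow> cl (\<lambda>x t. f x t + g x t)"
| mult: "cl f \<Longrightarrow> cl g \<Longrightarrow> cl (\<lambda>x t. f x t * g x t)"
| exp: "cl f \<Longrightarrow> cl (\<lambda>x t. exp (f x t))"

lemma cl_props: "cl f \<Longrightarrow> continuous_on UNIV (\<lambda>p. f (fst p) (snd p)) \<and> DX f \<and> DT f \<and> cl (dX f) \<and> cl (dT f)"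
proof (induction rule: cl.induct)
  case (base f)
  then show ?case
    by (cases rule: smooth2.cases) (auto simp: DX_def DT_def fd_iff intro: cl.base)
next
  case (const c)
  then show ?case by (simp add: DX_const DT_const dX_const_g dT_const_g cl.const continuous_on_const)
next
  case (add f g)
  then show ?case
    by (auto simp: DX_add DT_add dX_add_g dT_add_g intro!: cl.add continuous_intros)
next
  case (mult f g)
  then show ?case
    by (auto simp: DX_mult DT_mult dX_mult_g dT_mult_g intro!: cl.add cl.mult continuous_intros)
next
  case (exp f)
  then show ?case
    by (auto simp: DX_exp DT_exp dX_exp_g dT_exp_g intro!: cl.mult cl.exp continuous_intros)
qed

lemma cl_smooth: "cl f \<Longrightarrow> smooth2 f"
proof (coinduction arbitrary: f rule: smooth2.coinduct)
  case (smooth2 f)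
  then show ?case using cl_props[OF smooth2] by (auto simp: DX_def DT_def fd_iff)
qed

lemma sm_DX: "smooth2 f \<Longrightarrow> DX f" using cl_props[OF cl.base] by blast
lemma sm_DT: "smooth2 f \<Longrightarrow> DT f" using cl_props[OF cl.base] by blast
lemma sm_dX[simp]: "smooth2 f \<Longrightarrow> smooth2 (dX f)" by (erule smooth2.cases) auto
lemma sm_dT[simp]: "smooth2 f \<Longrightarrow> smooth2 (dT f)" by (erule smooth2.cases) auto
lemma sm_const[simp]: "smooth2 (\<lambda>x t. c)" by (rule cl_smooth[OF cl.const])
lemma sm_add[simp]: "smooth2 f \<Longrightarrow> smooth2 g \<Longrightarrow> smooth2 (\<lambda>x t. f x t + g x t)"
  by (rule cl_smooth[OF cl.add[OF cl.base cl.base]])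
lemma sm_mult[simp]: "smooth2 f \<Longrightarrow> smooth2 g \<Longrightarrow> smooth2 (\<lambda>x t. f x t * g x t)"
  by (rule cl_smooth[OF cl.mult[OF cl.base cl.base]])
lemma sm_exp[simp]: "smooth2 f \<Longrightarrow> smooth2 (\<lambda>x t. exp (f x t))"
  by (rule cl_smooth[OF cl.exp[OF cl.base]])
lemma sm_uminus[simp]: "smooth2 f \<Longrightarrow> smooth2 (\<lambda>x t. - f x t)"
  using sm_mult[OF sm_const[of "-1"], of f] by simp
lemma sm_diff[simp]: "smooth2 f \<Longrightarrow> smooth2 g \<Longrightarrow> smooth2 (\<lambda>x t. f x t - g x t)"
  using sm_add[OF _ sm_uminus, of f g] by simp
lemma sm_divide[simp]: "smooth2 f \<Longrightarrow> smooth2 (\<lambda>x t. f x t / c)"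
  using sm_mult[OF _ sm_const[of "1/c"], of f] by simp
lemma sm_power[simp]: "smooth2 f \<Longrightarrow> smooth2 (\<lambda>x t. f x t ^ n)"
  by (induction n) (auto)

lemma dX_const[simp]: "dX (\<lambda>x t. c) = (\<lambda>x t. 0)" by (simp add: dX_def)
lemma dT_const[simp]: "dT (\<lambda>x t. c) = (\<lambda>x t. 0)" by (simp add: dT_def)
lemma dX_add[simp]: "smooth2 f \<Longrightarrow> smooth2 g \<Longrightarrow> dX (\<lambda>x t. f x t + g x t) = (\<lambda>x t. dX f x t + dX g x t)"
  by (simp add: dX_add_g sm_DX)
lemma dT_add[simp]: "smooth2 f \<Longrightarrow> smooth2 g \<Longrightarrow> dT (\<lambda>x t. f x t + g x t) = (\<lambda>x t. dT f x t + dT g x t)"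
  by (simp add: dT_add_g sm_DT)
lemma dX_mult[simp]: "smooth2 f \<Longrightarrow> smooth2 g \<Longrightarrow> dX (\<lambda>x t. f x t * g x t) = (\<lambda>x t. dX f x t * g x t + f x t * dX g x t)"
  by (simp add: dX_mult_g sm_DX)
lemma dT_mult[simp]: "smooth2 f \<Longrightarrow> smooth2 g \<Longrightarrow> dT (\<lambda>x t. f x t * g x t) = (\<lambda>x t. dT f x t * g x t + f x t * dT g x t)"
  by (simp add: dT_mult_g sm_DT)
lemma dX_exp[simp]: "smooth2 f \<Longrightarrow> dX (\<lambda>x t. exp (f x t)) = (\<lambda>x t. exp (f x t) * dX f x t)"
  by (simp add: dX_exp_g sm_DX)
lemma dT_exp[simp]: "smooth2 f \<Longrightarrow> dT (\<lambda>x t. exp (f x t)) = (\<lambda>x t. exp (f x t) * dT f x t)"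
  by (simp add: dT_exp_g sm_DT)
lemma dX_uminus[simp]: "smooth2 f \<Longrightarrow> dX (\<lambda>x t. - f x t) = (\<lambda>x t. - dX f x t)"
  using dX_mult[OF sm_const[of "-1"], of f] by simp
lemma dT_uminus[simp]: "smooth2 f \<Longrightarrow> dT (\<lambda>x t. - f x t) = (\<lambda>x t. - dT f x t)"
  using dT_mult[OF sm_const[of "-1"], of f] by simp
lemma dX_diff[simp]: "smooth2 f \<Longrightarrow> smooth2 g \<Longrightarrow> dX (\<lambda>x t. f x t - g x t) = (\<lambda>x t. dX f x t - dX g x t)"
  using dX_add[OF _ sm_uminus, of f g] by simp
lemma dT_diff[simp]: "smooth2 f \<Longrightarrow> smooth2 g \<Longrightarrow> dT (\<lambda>x t. f x t - g x t) = (\<lambda>x t. dT f x t - dT g x t)"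
  using dT_add[OF _ sm_uminus, of f g] by simp
lemma dX_divide[simp]: "smooth2 f \<Longrightarrow> dX (\<lambda>x t. f x t / c) = (\<lambda>x t. dX f x t / c)"
  using dX_mult[OF _ sm_const[of "1/c"], of f] by simp
lemma dT_divide[simp]: "smooth2 f \<Longrightarrow> dT (\<lambda>x t. f x t / c) = (\<lambda>x t. dT f x t / c)"
  using dT_mult[OF _ sm_const[of "1/c"], of f] by simp
lemma dX_power2[simp]: "smooth2 f \<Longrightarrow> dX (\<lambda>x t. f x t ^ 2) = (\<lambda>x t. 2 * f x t * dX f x t)"
  using dX_mult[of f f] by (simp add: power2_eq_square algebra_simps)
lemma dT_power2[simp]: "smooth2 f \<Longrightarrow> dT (\<lambda>x t. f x t ^ 2) = (\<lambda>x t. 2 * f x t * dT f x t)"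
  using dT_mult[of f f] by (simp add: power2_eq_square algebra_simps)



lemma clairaut:
  assumes sf: "smooth2 f"
  shows "dT (dX f) x t = dX (dT f) x t"
proof -
  define ftx where "ftx = dX (dT f)"
  have sftx: "smooth2 ftx" unfolding ftx_def using sf by simp
  have cont: "continuous_on UNIV (\<lambda>p. ftx (fst p) (snd p))"
    using sftx by (cases rule: smooth2.cases) auto
  have contp: "continuous_on S (\<lambda>(y, s). ftx y s)" for S
    using continuous_on_subset[OF cont] by (simp add: split_beta)
  have contt: "continuous_on S (ftx y)" for y S
  proof -
    have "continuous_on S (\<lambda>s. (\<lambda>p. ftx (fst p) (snd p)) (y, s))"
      by (rule continuous_on_compose2[OF cont]) (auto intro!: continuous_intros)
    then show ?thesis by simp
  qed
  have dft: "((\<lambda>y. dT f y s) has_field_derivative ftx y s) (at y)" for y s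
    using sm_DX[OF sm_dT[OF sf]] unfolding DX_def ftx_def dX_def
    by (simp add: DERIV_deriv_iff_field_differentiable)
  have df: "((\<lambda>s. f y s) has_field_derivative dT f y s) (at s)" for y s
    using sm_DT[OF sf] unfolding DT_def dT_def
    by (simp add: DERIV_deriv_iff_field_differentiable)
  have dfx: "((\<lambda>y. f y s) has_field_derivative dX f y s) (at y)" for y s
    using sm_DX[OF sf] unfolding DX_def dX_def
    by (simp add: DERIV_deriv_iff_field_differentiable)
  have sft: "smooth2 (dT f)" using sf by simp
  have contft: "continuous_on S (dT f y)" for y S
  proof -
    have c: "continuous_on UNIV (\<lambda>p. dT f (fst p) (snd p))"
      using sft by (cases rule: smooth2.cases) auto
    have "continuous_on S (\<lambda>s. (\<lambda>p. dT f (fst p) (snd p)) (y, s))"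
      by (rule continuous_on_compose2[OF c]) (auto intro!: continuous_intros)
    then show ?thesis by simp
  qed
  define a where "a = t - 1"
  have key: "dX f x b - dX f x a = integral {a..b} (ftx x)" if "a \<le> b" for b
  proof -
    have int: "integral {a..b} (dT f y) = f y b - f y a" for y
    proof -
      have "(dT f y has_integral (f y b - f y a)) {a..b}"
        apply (rule fundamental_theorem_of_calculus[OF that])
        apply (subst has_real_derivative_iff_has_vector_derivative[symmetric])
        apply (rule has_field_derivative_at_within[OF df])
        done
      then show ?thesis by (rule integral_unique)
    qed
    have L: "((\<lambda>y. integral (cbox a b) (dT f y)) has_field_derivative integral (cbox a b) (ftx x)) (at x within UNIV)"
      apply (rule leibniz_rule_field_derivative)
      apply (rule has_field_derivative_at_within[OF dft])
      apply (rule integrable_continuous[OF contft])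
      apply (rule contp)
      apply simp
      apply simp
      done
    then have L2: "((\<lambda>y. f y b - f y a) has_field_derivative integral {a..b} (ftx x)) (at x)"
      by (simp add: cbox_interval int)
    have "((\<lambda>y. f y b - f y a) has_field_derivative dX f x b - dX f x a) (at x)"
      by (intro derivative_intros dfx)
    from DERIV_unique[OF this L2] show ?thesis .
  qed
  have D1: "((\<lambda>b. dX f x a + integral {a..b} (ftx x)) has_field_derivative ftx x t) (at t)"
  proof -
    have "((\<lambda>b. integral {a..b} (ftx x)) has_field_derivative ftx x t) (at t within {a..t+1})"
      by (rule integral_has_real_derivative[OF contt]) (simp add: a_def)
    moreover have "t \<in> interior {a..t+1}" by (simp add: a_def)
    ultimately have "((\<lambda>b. integral {a..b} (ftx x)) has_field_derivative ftx x t) (at t)"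
      using at_within_interior by metis
    then show ?thesis using DERIV_add[OF DERIV_const] by fastforce
  qed
  have D2: "((\<lambda>b. dX f x b) has_field_derivative ftx x t) (at t)"
  proof (rule has_field_derivative_transform_within_open[OF D1, of "{a<..}"])
    show "open {a<..}" by simp
    show "t \<in> {a<..}" by (simp add: a_def)
    fix b assume "b \<in> {a<..}"
    then show "dX f x a + integral {a..b} (ftx x) = dX f x b" using key[of b] by auto
  qed
  show ?thesis using DERIV_imp_deriv[OF D2] by (simp add: ftx_def dT_def[of "dX f"])
qed

lemma clairaut_fun[simp]: "smooth2 f \<Longrightarrow> dT (dX f) = dX (dT f)"
  by (intro ext clairaut)



definition jet1 :: "(real \<Rightarrow> real) \<Rightarrow> real \<Rightarrow> real \<Rightarrow> bool" where
  "jet1 \<phi> a b \<longleftrightarrow> (\<exists>C\<ge>0. eventually (\<lambda>\<tau>. \<bar>\<phi> \<tau> - a - b*\<tau>\<bar> \<le> C * \<tau>^2) (at 0))"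

lemma ev_small: "0 < e \<Longrightarrow> eventually (\<lambda>\<tau>::real. \<bar>\<tau>\<bar> < e) (at 0)"
  unfolding eventually_at by (rule exI[of _ e]) (auto simp: dist_real_def)

lemma jet1_final: "jet1 \<phi> a b \<Longrightarrow> a = 0 \<Longrightarrow> b = 0 \<Longrightarrow> \<phi> \<in> O[at 0](\<lambda>\<tau>. \<tau>^2)"
  unfolding jet1_def
proof (elim exE conjE)
  fix C assume "a = 0" "b = 0" "C \<ge> 0" "\<forall>\<^sub>F \<tau> in at 0. \<bar>\<phi> \<tau> - a - b * \<tau>\<bar> \<le> C * \<tau>\<^sup>2"
  then show ?thesis by (intro bigoI[of _ C]) auto
qed

lemma add_bound: "\<bar>x\<bar> \<le> A \<Longrightarrow> \<bar>y\<bar> \<le> B \<Longrightarrow> \<bar>x + y\<bar> \<le> A + (B::real)"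
  by (rule order_trans[OF abs_triangle_ineq]) (rule add_mono)

lemma jet_const: "jet1 (\<lambda>\<tau>. c) c 0"
  unfolding jet1_def by (auto intro!: exI[of _ 0])

lemma jet_id: "jet1 (\<lambda>\<tau>. \<tau>) 0 1"
  unfolding jet1_def by (auto intro!: exI[of _ 0])

lemma jet_add: "jet1 f a b \<Longrightarrow> jet1 g c d \<Longrightarrow> jet1 (\<lambda>\<tau>. f \<tau> + g \<tau>) (a + c) (b + d)"
  unfolding jet1_def
proof (elim exE conjE)
  fix C1 C2 assume c1: "C1 \<ge> 0" "\<forall>\<^sub>F \<tau> in at 0. \<bar>f \<tau> - a - b * \<tau>\<bar> \<le> C1 * \<tau>\<^sup>2"
    and c2: "C2 \<ge> 0" "\<forall>\<^sub>F \<tau> in at 0. \<bar>g \<tau> - c - d * \<tau>\<bar> \<le> C2 * \<tau>\<^sup>2"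
  have "\<forall>\<^sub>F \<tau> in at 0. \<bar>f \<tau> + g \<tau> - (a + c) - (b + d) * \<tau>\<bar> \<le> (C1 + C2) * \<tau>\<^sup>2"
    using c1(2) c2(2)
  proof eventually_elim
    case (elim \<tau>)
    have "\<bar>(f \<tau> - a - b * \<tau>) + (g \<tau> - c - d * \<tau>)\<bar> \<le> C1 * \<tau>\<^sup>2 + C2 * \<tau>\<^sup>2"
      by (rule add_bound) (use elim in auto)
    moreover have "f \<tau> + g \<tau> - (a + c) - (b + d) * \<tau> = (f \<tau> - a - b * \<tau>) + (g \<tau> - c - d * \<tau>)"
      by (simp add: algebra_simps)
    ultimately show ?case by (simp add: distrib_right)
  qed
  then show "\<exists>C\<ge>0. \<forall>\<^sub>F \<tau> in at 0. \<bar>f \<tau> + g \<tau> - (a + c) - (b + d) * \<tau>\<bar> \<le> C * \<tau>\<^sup>2"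
    using c1 c2 by (intro exI[of _ "C1 + C2"]) auto
qed

lemma mult_bound:
  fixes a b c d u v C1 C2 \<tau> :: real
  assumes "\<bar>u\<bar> \<le> C1 * \<tau>^2" "\<bar>v\<bar> \<le> C2 * \<tau>^2" "\<bar>\<tau>\<bar> < 1" "C1 \<ge> 0" "C2 \<ge> 0"
  shows "\<bar>(a + b*\<tau> + u) * (c + d*\<tau> + v) - a*c - (a*d + b*c)*\<tau>\<bar>
     \<le> (\<bar>b\<bar>*\<bar>d\<bar> + C1 * (\<bar>c\<bar> + \<bar>d\<bar> + C2) + (\<bar>a\<bar> + \<bar>b\<bar>) * C2) * \<tau>^2"
proof -
  have t2: "\<tau>^2 \<le> 1" using assms(3) by (simp add: abs_square_le_1 less_imp_le)
  have e: "(a + b * \<tau> + u) * (c + d * \<tau> + v) - a * c - (a * d + b * c) * \<tau> = b * d * \<tau>^2 + u * (c + d * \<tau> + v) + (a + b * \<tau>) * v"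
    by (simp add: algebra_simps power2_eq_square)
  have g: "\<bar>c + d*\<tau> + v\<bar> \<le> \<bar>c\<bar> + \<bar>d\<bar> + C2"
  proof -
    have "\<bar>d*\<tau>\<bar> \<le> \<bar>d\<bar>" using assms(3) by (simp add: abs_mult mult_left_le)
    moreover have "\<bar>v\<bar> \<le> C2" using assms(2) t2 assms(5) by (meson mult_left_le order_trans)
    ultimately show ?thesis by linarith
  qed
  have h: "\<bar>a + b*\<tau>\<bar> \<le> \<bar>a\<bar> + \<bar>b\<bar>"
  proof -
    have "\<bar>b*\<tau>\<bar> \<le> \<bar>b\<bar>" using assms(3) by (simp add: abs_mult mult_left_le)
    then show ?thesis by linarith
  qed
  have 1: "\<bar>b*d*\<tau>^2\<bar> = \<bar>b\<bar>*\<bar>d\<bar>*\<tau>^2" by (simp add: abs_mult)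
  have 2: "\<bar>u*(c + d*\<tau> + v)\<bar> \<le> C1 * \<tau>^2 * (\<bar>c\<bar> + \<bar>d\<bar> + C2)"
    unfolding abs_mult by (rule mult_mono[OF assms(1) g]) (use assms in auto)
  have 3: "\<bar>(a + b * \<tau>) * v\<bar> \<le> (\<bar>a\<bar> + \<bar>b\<bar>) * (C2 * \<tau>^2)"
    unfolding abs_mult by (rule mult_mono[OF h assms(2)]) auto
  have 4: "\<bar>b * d * \<tau>^2 + u * (c + d * \<tau> + v) + (a + b * \<tau>) * v\<bar> \<le> \<bar>b\<bar>*\<bar>d\<bar>*\<tau>^2 + C1 * \<tau>^2 * (\<bar>c\<bar> + \<bar>d\<bar> + C2) + (\<bar>a\<bar> + \<bar>b\<bar>) * (C2 * \<tau>^2)"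
    by (intro add_bound) (use 1 2 3 in auto)
  have 5: "\<bar>b\<bar>*\<bar>d\<bar>*\<tau>^2 + C1 * \<tau>^2 * (\<bar>c\<bar> + \<bar>d\<bar> + C2) + (\<bar>a\<bar> + \<bar>b\<bar>) * (C2 * \<tau>^2) = (\<bar>b\<bar>*\<bar>d\<bar> + C1 * (\<bar>c\<bar> + \<bar>d\<bar> + C2) + (\<bar>a\<bar> + \<bar>b\<bar>) * C2) * \<tau>^2"
    by (simp add: algebra_simps)
  show ?thesis unfolding e using 4 5 by simp
qed

lemma jet_mult: "jet1 f a b \<Longrightarrow> jet1 g c d \<Longrightarrow> jet1 (\<lambda>\<tau>. f \<tau> * g \<tau>) (a * c) (a * d + b * c)"
  unfolding jet1_def
proof (elim exE conjE)
  fix C1 C2 assume c1: "C1 \<ge> 0" "\<forall>\<^sub>F \<tau> in at 0. \<bar>f \<tau> - a - b * \<tau>\<bar> \<le> C1 * \<tau>\<^sup>2"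
    and c2: "C2 \<ge> 0" "\<forall>\<^sub>F \<tau> in at 0. \<bar>g \<tau> - c - d * \<tau>\<bar> \<le> C2 * \<tau>\<^sup>2"
  define C where "C = \<bar>b\<bar>*\<bar>d\<bar> + C1 * (\<bar>c\<bar> + \<bar>d\<bar> + C2) + (\<bar>a\<bar> + \<bar>b\<bar>) * C2"
  have "\<forall>\<^sub>F \<tau> in at 0. \<bar>f \<tau> * g \<tau> - a * c - (a * d + b * c) * \<tau>\<bar> \<le> C * \<tau>\<^sup>2"
    using c1(2) c2(2) ev_small[of 1, simplified]
  proof eventually_elim
    case (elim \<tau>)
    have "\<bar>(a + b*\<tau> + (f \<tau> - a - b * \<tau>)) * (c + d*\<tau> + (g \<tau> - c - d * \<tau>)) - a*c - (a*d + b*c)*\<tau>\<bar> \<le> C * \<tau>^2"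
      unfolding C_def by (rule mult_bound) (use elim c1 c2 in auto)
    then show ?case by simp
  qed
  moreover have "C \<ge> 0" unfolding C_def using c1 c2 by auto
  ultimately show "\<exists>C\<ge>0. \<forall>\<^sub>F \<tau> in at 0. \<bar>f \<tau> * g \<tau> - a * c - (a * d + b * c) * \<tau>\<bar> \<le> C * \<tau>\<^sup>2"
    by blast
qed

lemma jet_uminus: "jet1 f a b \<Longrightarrow> jet1 (\<lambda>\<tau>. - f \<tau>) (- a) (- b)"
  using jet_mult[OF jet_const[of "-1"]] by simp

lemma jet_diff: "jet1 f a b \<Longrightarrow> jet1 g c d \<Longrightarrow> jet1 (\<lambda>\<tau>. f \<tau> - g \<tau>) (a - c) (b - d)"
  using jet_add[OF _ jet_uminus] by simp

lemma jet_divide: "jet1 f a b \<Longrightarrow> jet1 (\<lambda>\<tau>. f \<tau> / k) (a / k) (b / k)"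
  using jet_mult[OF _ jet_const[of "1/k"]] by simp

lemma jet_power2: "jet1 f a b \<Longrightarrow> jet1 (\<lambda>\<tau>. f \<tau> ^ 2) (a ^ 2) (2 * a * b)"
  using jet_mult[of f a b f a b] by (simp add: power2_eq_square algebra_simps)

lemma exp_quad:
  fixes w :: real assumes "\<bar>w\<bar> \<le> 1" shows "\<bar>exp w - 1 - w\<bar> \<le> w^2"
proof -
  have lo: "1 + w \<le> exp w" by (rule exp_ge_add_one_self)
  have up: "exp w \<le> 1 + w + w^2"
  proof (cases "w \<ge> 0")
    case True then show ?thesis using exp_bound[of w] assms by auto
  next
    case False
    define v where "v = - w"
    have v: "0 < v" "v \<le> 1" using False assms by (auto simp: v_def)
    have "0 < v^2" using v by simp
    then have p: "0 < 1 - v + v^2" using v by linarith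
    have "(1 + v) * (1 - v + v^2) \<le> exp v * (1 - v + v^2)"
      by (rule mult_right_mono[OF exp_ge_add_one_self]) (use p in auto)
    moreover have "(1 + v) * (1 - v + v^2) = 1 + v^3" by (simp add: algebra_simps power2_eq_square power3_eq_cube)
    moreover have "0 \<le> v^3" using v by simp
    ultimately have "1 \<le> exp v * (1 - v + v^2)" by linarith
    then have "1 / exp v \<le> 1 - v + v^2" by (simp add: field_simps)
    then show ?thesis by (simp add: v_def exp_minus field_simps)
  qed
  have "0 \<le> w^2" by simp
  then show ?thesis using lo up unfolding abs_le_iff by (intro conjI; linarith)
qed

lemma jet_exp: "jet1 f a b \<Longrightarrow> jet1 (\<lambda>\<tau>. exp (f \<tau>)) (exp a) (exp a * b)"
  unfolding jet1_def
proof (elim exE conjE)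
  fix C1 assume c1: "C1 \<ge> 0" "\<forall>\<^sub>F \<tau> in at 0. \<bar>f \<tau> - a - b * \<tau>\<bar> \<le> C1 * \<tau>\<^sup>2"
  define B where "B = \<bar>b\<bar> + C1"
  define C where "C = exp a * (B^2 + C1)"
  have evB: "\<forall>\<^sub>F \<tau> in at 0. \<bar>\<tau>\<bar> < 1 / (B + 1)"
    by (rule ev_small) (use c1 in \<open>simp add: B_def add_nonneg_pos\<close>)
  have "\<forall>\<^sub>F \<tau> in at 0. \<bar>exp (f \<tau>) - exp a - exp a * b * \<tau>\<bar> \<le> C * \<tau>\<^sup>2"
    using c1(2) ev_small[of 1, simplified] evB
  proof eventually_elim
    case (elim \<tau>)
    define u where "u = f \<tau> - a - b * \<tau>"
    define w where "w = b * \<tau> + u"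
    have B0: "B \<ge> 0" using c1 by (simp add: B_def)
    have t2: "\<tau>^2 \<le> \<bar>\<tau>\<bar>"
    proof -
      have "\<tau>^2 = \<bar>\<tau>\<bar> * \<bar>\<tau>\<bar>" by (simp add: power2_eq_square)
      also have "\<dots> \<le> \<bar>\<tau>\<bar> * 1" using elim(2) by (intro mult_left_mono) auto
      finally show ?thesis by simp
    qed
    have wb: "\<bar>w\<bar> \<le> B * \<bar>\<tau>\<bar>"
    proof -
      have "\<bar>u\<bar> \<le> C1 * \<bar>\<tau>\<bar>" using elim(1) t2 c1(1) unfolding u_def by (meson mult_left_mono order_trans)
      moreover have "\<bar>w\<bar> \<le> \<bar>b\<bar> * \<bar>\<tau>\<bar> + \<bar>u\<bar>" unfolding w_def using abs_triangle_ineq[of "b * \<tau>" u] by (simp add: abs_mult)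
      moreover have "B * \<bar>\<tau>\<bar> = \<bar>b\<bar> * \<bar>\<tau>\<bar> + C1 * \<bar>\<tau>\<bar>" by (simp add: B_def distrib_right)
      ultimately show ?thesis by linarith
    qed
    have "B * \<bar>\<tau>\<bar> \<le> 1"
    proof -
      have "B * \<bar>\<tau>\<bar> \<le> (B + 1) * \<bar>\<tau>\<bar>" by (simp add: mult_right_mono)
      also have "\<dots> \<le> (B + 1) * (1 / (B + 1))" using elim(3) B0 by (intro mult_left_mono) auto
      also have "\<dots> = 1" using B0 by simp
      finally show ?thesis .
    qed
    then have w1: "\<bar>w\<bar> \<le> 1" using wb by linarith
    have q: "\<bar>exp w - 1 - w\<bar> \<le> B^2 * \<tau>^2"
    proof -
      have "\<bar>exp w - 1 - w\<bar> \<le> w^2" by (rule exp_quad[OF w1])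
      also have "\<dots> \<le> (B * \<bar>\<tau>\<bar>)^2" using power_mono[OF wb abs_ge_zero, of 2] by simp
      also have "\<dots> = B^2 * \<tau>^2" by (simp add: power_mult_distrib)
      finally show ?thesis .
    qed
    have e: "exp (f \<tau>) - exp a - exp a * b * \<tau> = exp a * ((exp w - 1 - w) + u)"
      unfolding w_def u_def by (simp add: algebra_simps exp_add[symmetric])
    have "\<bar>(exp w - 1 - w) + u\<bar> \<le> (B^2 + C1) * \<tau>^2"
      using add_bound[OF q elim(1)] unfolding u_def by (simp add: distrib_right)
    then have "exp a * \<bar>(exp w - 1 - w) + u\<bar> \<le> exp a * ((B^2 + C1) * \<tau>^2)"
      by (rule mult_left_mono) simp
    then show ?case unfolding e C_def by (simp add: abs_mult)
  qed
  moreover have "C \<ge> 0" unfolding C_def using c1 by auto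
  ultimately show "\<exists>C\<ge>0. \<forall>\<^sub>F \<tau> in at 0. \<bar>exp (f \<tau>) - exp a - exp a * b * \<tau>\<bar> \<le> C * \<tau>\<^sup>2"
    by blast
qed

lemmas jet_rules = jet_const jet_id jet_add jet_diff jet_mult jet_uminus jet_divide jet_power2 jet_exp



theorem theorem6:
  fixes \<nu> \<epsilon> \<zeta> :: real
    and U m g d b :: "real \<Rightarrow> real \<Rightarrow> real"
  assumes "\<nu> \<ge> 0" and "\<epsilon> \<in> {0, 1}" and "1 + \<zeta> * \<nu>^2 \<noteq> 0"
    and "smooth2 U" "smooth2 m" "smooth2 g" "smooth2 d" "smooth2 b"
    and "is_solution \<nu> \<epsilon> \<zeta> U m g d b"
  shows "\<forall>X T. \<forall>i < 8.
    (\<lambda>\<tau>. residuals \<nu> \<epsilon> \<zeta>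
        (\<lambda>x t. U x t + \<tau> * QU \<nu> \<epsilon> \<zeta> U m g d b x t)
        (\<lambda>x t. m x t + \<tau> * Qm \<nu> \<epsilon> \<zeta> U m g d b x t)
        (\<lambda>x t. g x t + \<tau> * Qg \<nu> \<epsilon> \<zeta> U m g d b x t)
        (\<lambda>x t. d x t + \<tau> * Qd \<nu> \<epsilon> \<zeta> U m g d b x t)
        (\<lambda>x t. b x t + \<tau> * Qb \<nu> \<epsilon> \<zeta> U m g d b x t) X T ! i)
    \<in> O[at (0::real)](\<lambda>\<tau>. \<tau>^2)"
  proof (intro allI impI)
  fix X T :: real and i :: nat
  assume i8: "i < 8"
  note sU = assms(4) and sm = assms(5) and sg = assms(6) and sd = assms(7) and sb = assms(8) and sol = assms(9)
  define K where "K = 1 + \<zeta> * \<nu>^2"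
  define s where "s = \<zeta> + sqrt \<nu>"
  define c where "c = \<nu> powr (5/2)"
  have K0: "K \<noteq> 0" using assms(3) by (simp add: K_def)
  define w where "w = sqrt \<nu>"
  have w0: "w \<ge> 0" using assms(1) by (simp add: w_def)
  have nu_w: "\<nu> = w^2" using assms(1) by (simp add: w_def)
  have sq_w: "sqrt \<nu> = w" by (simp add: w_def)
  have c_w: "c = w^5"
  proof (cases "\<nu> = 0")
    case True then show ?thesis by (simp add: c_def w_def)
  next
    case False
    then have "\<nu> > 0" using assms(1) by simp
    have "\<nu> powr (5/2) = (\<nu> powr (1/2)) powr 5" by (simp add: powr_powr)
    also have "\<dots> = w powr 5" using assms(1) by (simp add: powr_half_sqrt w_def)
    also have "\<dots> = w^5" using \<open>\<nu> > 0\<close> by (simp add: w_def powr_realpow)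
    finally show ?thesis by (simp add: c_def)
  qed
  have s_w: "s = \<zeta> + w" by (simp add: s_def w_def)
  define L where "L = inverse K"
  have KL: "inverse K = L" by (simp add: L_def)
  have KL1: "K * L = 1" using K0 by (simp add: L_def)
  have K_w: "K = 1 + \<zeta> * w^4" by (simp add: K_def nu_w flip: power_mult)
  have R: "\<And>X T. \<forall>r\<in>set (residuals \<nu> \<epsilon> \<zeta> U m g d b X T). r = 0"
    using sol unfolding is_solution_def by blast
  note R' = R[unfolded residuals_def Let_def, simplified]
  have e1: "m X T = \<nu>^2 * dX (dX U) X T - \<epsilon> * U X T" for X T using R'[of X T] by simp
  have em: "m = (\<lambda>x t. \<nu>^2 * dX (dX U) x t - \<epsilon> * U x t)" using e1 by (intro ext) simp
  have e1x: "dX m X T = \<nu>^2 * dX (dX (dX U)) X T - \<epsilon> * dX U X T" for X T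
    by (subst em) (simp add: sU)
  have e1xx: "dX (dX m) X T = \<nu>^2 * dX (dX (dX (dX U))) X T - \<epsilon> * dX (dX U) X T" for X T
    by (subst em) (simp add: sU)
  have emT: "dT m = (\<lambda>x t. - dX m x t * U x t - 2 * m x t * dX U x t + 2/3 * (1 - c) * dX (dX (dX U)) x t)"
    using R' by (intro ext) (simp add: c_def)
  have egX: "dX g = (\<lambda>x t. - 3 / (4 * K) * (g x t)^2 + m x t + 1/3 * \<epsilon> * s)"
    using R' by (intro ext) (simp add: K_def s_def)
  have egT: "dT g = dX (\<lambda>x t. 2/3 * K * dX U x t - 2/3 * s * g x t - g x t * U x t)"
    using R' by (intro ext) (simp add: K_def s_def)
  have edX: "dX d = g"
    using R' by (intro ext) simp
  have edT: "dT d = (\<lambda>x t. 2/3 * K * dX U x t - 2/3 * s * g x t - U x t * g x t)"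
    using R' by (intro ext) (simp add: K_def s_def)
  have ebX: "dX b = (\<lambda>x t. (\<nu>^2 * m x t + 1/3 * \<epsilon> * (c - 1)) * exp (3 * d x t / (2 * K)))"
    using R' by (intro ext) (simp add: K_def c_def)
  have ebT: "dT b = (\<lambda>x t. (- 1/3 * (c - 1) * (2 * m x t + \<epsilon> * U x t) - 1/2 * (g x t)^2
                   + 2/9 * \<epsilon> * (2 * \<zeta> + \<zeta>^2 * \<nu>^2 - \<nu>^3 + 2 * sqrt \<nu>)
                   - \<nu>^2 * U x t * m x t) * exp (3 * d x t / (2 * K)))"
    using R' by (intro ext) (simp add: K_def c_def)
  have res_eq: "\<And>U m g d b X T. residuals \<nu> \<epsilon> \<zeta> U m g d b X T = 
    [ m X T - (\<nu>^2 * dX (dX U) X T - \<epsilon> * U X T),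
      dT m X T - (- dX m X T * U X T - 2 * m X T * dX U X T
                   + 2/3 * (1 - c) * dX (dX (dX U)) X T),
      dX g X T - (- 3 / (4 * K) * (g X T)^2 + m X T + 1/3 * \<epsilon> * s),
      dT g X T - dX (\<lambda>x t. 2/3 * K * dX U x t - 2/3 * s * g x t - g x t * U x t) X T,
      dX d X T - g X T,
      dT d X T - (2/3 * K * dX U X T - 2/3 * s * g X T - U X T * g X T),
      dX b X T - (\<nu>^2 * m X T + 1/3 * \<epsilon> * (c - 1)) * exp (3 * d X T / (2 * K)),
      dT b X T - (- 1/3 * (c - 1) * (2 * m X T + \<epsilon> * U X T) - 1/2 * (g X T)^2
                   + 2/9 * \<epsilon> * (2 * \<zeta> + \<zeta>^2 * \<nu>^2 - \<nu>^3 + 2 * sqrt \<nu>)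
                   - \<nu>^2 * U X T * m X T) * exp (3 * d X T / (2 * K)) ]"
    by (simp add: residuals_def Let_def K_def s_def c_def)
  have QU_eq: "QU \<nu> \<epsilon> \<zeta> U m g d b = (\<lambda>X T. g X T * exp (3 * d X T / (2 * K)))"
    by (simp add: QU_def K_def)
  have Qm_eq: "Qm \<nu> \<epsilon> \<zeta> U m g d b = (\<lambda>X T. (\<nu>^2 * dX m X T + 3 * \<nu>^2 * g X T / K * m X T + g X T * \<epsilon> * (c - 1) / K)
     * exp (3 * d X T / (2 * K)))"
    by (simp add: Qm_def K_def c_def Let_def)
  have Qg_eq: "Qg \<nu> \<epsilon> \<zeta> U m g d b = (\<lambda>X T. (\<nu>^2 * m X T + 1/3 * \<epsilon> * (c - 1)) * exp (3 * d X T / (2 * K)))"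
    by (simp add: Qg_def K_def c_def)
  have Qd_eq: "Qd \<nu> \<epsilon> \<zeta> U m g d b = b"
    by (simp add: Qd_def)
  have Qb_eq: "Qb \<nu> \<epsilon> \<zeta> U m g d b = (\<lambda>X T. \<nu>^2 * (\<nu>^2 * m X T + 1/3 * \<epsilon> * (c - 1)) * (exp (3 * d X T / (2 * K)))^2
     + 3 / (4 * K) * (b X T)^2)"
    by (simp add: Qb_def K_def c_def Let_def)
  note eqs = emT egX egT edX edT ebX ebT
  note [simp] = sU sm sg sd sb
  have "i = 0 \<or> i = Suc (0) \<or> i = Suc (Suc (0)) \<or> i = Suc (Suc (Suc (0))) \<or> i = Suc (Suc (Suc (Suc (0)))) \<or> i = Suc (Suc (Suc (Suc (Suc (0))))) \<or> i = Suc (Suc (Suc (Suc (Suc (Suc (0)))))) \<or> i = Suc (Suc (Suc (Suc (Suc (Suc (Suc (0)))))))" using i8 by (simp add: eval_nat_numeral less_Suc_eq)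
  then show "(\<lambda>\<tau>. residuals \<nu> \<epsilon> \<zeta>
        (\<lambda>x t. U x t + \<tau> * QU \<nu> \<epsilon> \<zeta> U m g d b x t)
        (\<lambda>x t. m x t + \<tau> * Qm \<nu> \<epsilon> \<zeta> U m g d b x t)
        (\<lambda>x t. g x t + \<tau> * Qg \<nu> \<epsilon> \<zeta> U m g d b x t)
        (\<lambda>x t. d x t + \<tau> * Qd \<nu> \<epsilon> \<zeta> U m g d b x t)
        (\<lambda>x t. b x t + \<tau> * Qb \<nu> \<epsilon> \<zeta> U m g d b x t) X T ! i)
    \<in> O[at (0::real)](\<lambda>\<tau>. \<tau>^2)"
  proof (elim disjE)
    assume i: "i = 0"
    show ?thesis
      unfolding i res_eq QU_eq Qm_eq Qg_eq Qd_eq Qb_eq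
      apply (simp only: nth_Cons_0 nth_Cons_Suc)
      apply (simp add: eqs)
      apply ((rule jet1_final)?)
      apply ((rule jet_rules)+)?
      apply ((simp_all add: K0 e1 e1x e1xx)?)
      apply ((simp_all only: s_w c_w sq_w)?)
      apply ((simp_all only: nu_w divide_inverse inverse_mult_distrib KL)?)
      apply ((simp_all only: inverse_eq_divide)?)
      apply ((simp_all add: field_simps)?)
      apply ((use KL1 K_w in algebra)+)?
      apply ((simp add: power2_eq_square algebra_simps)+)?
      done
  next
    assume i: "i = Suc (0)"
    show ?thesis
      unfolding i res_eq QU_eq Qm_eq Qg_eq Qd_eq Qb_eq
      apply (simp only: nth_Cons_0 nth_Cons_Suc)
      apply (simp add: eqs)
      apply ((rule jet1_final)?)
      apply ((rule jet_rules)+)?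
      apply ((simp_all add: K0 e1 e1x e1xx)?)
      apply ((simp_all only: s_w c_w sq_w)?)
      apply ((simp_all only: nu_w divide_inverse inverse_mult_distrib KL)?)
      apply ((simp_all only: inverse_eq_divide)?)
      apply ((simp_all add: field_simps)?)
      apply ((use KL1 K_w in algebra)+)?
      apply ((simp add: power2_eq_square algebra_simps)+)?
      done
  next
    assume i: "i = Suc (Suc (0))"
    show ?thesis
      unfolding i res_eq QU_eq Qm_eq Qg_eq Qd_eq Qb_eq
      apply (simp only: nth_Cons_0 nth_Cons_Suc)
      apply (simp add: eqs)
      apply ((rule jet1_final)?)
      apply ((rule jet_rules)+)?
      apply ((simp_all add: K0 e1 e1x e1xx)?)
      apply ((simp_all only: s_w c_w sq_w)?)
      apply ((simp_all only: nu_w divide_inverse inverse_mult_distrib KL)?)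
      apply ((simp_all only: inverse_eq_divide)?)
      apply ((simp_all add: field_simps)?)
      apply ((use KL1 K_w in algebra)+)?
      apply ((simp add: power2_eq_square algebra_simps)+)?
      done
  next
    assume i: "i = Suc (Suc (Suc (0)))"
    show ?thesis
      unfolding i res_eq QU_eq Qm_eq Qg_eq Qd_eq Qb_eq
      apply (simp only: nth_Cons_0 nth_Cons_Suc)
      apply (simp add: eqs)
      apply ((rule jet1_final)?)
      apply ((rule jet_rules)+)?
      apply ((simp_all add: K0 e1 e1x e1xx)?)
      apply ((simp_all only: s_w c_w sq_w)?)
      apply ((simp_all only: nu_w divide_inverse inverse_mult_distrib KL)?)
      apply ((simp_all only: inverse_eq_divide)?)
      apply ((simp_all add: field_simps)?)
      apply ((use KL1 K_w in algebra)+)?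
      apply ((simp add: power2_eq_square algebra_simps)+)?
      done
  next
    assume i: "i = Suc (Suc (Suc (Suc (0))))"
    show ?thesis
      unfolding i res_eq QU_eq Qm_eq Qg_eq Qd_eq Qb_eq
      apply (simp only: nth_Cons_0 nth_Cons_Suc)
      apply (simp add: eqs)
      apply ((rule jet1_final)?)
      apply ((rule jet_rules)+)?
      apply ((simp_all add: K0 e1 e1x e1xx)?)
      apply ((simp_all only: s_w c_w sq_w)?)
      apply ((simp_all only: nu_w divide_inverse inverse_mult_distrib KL)?)
      apply ((simp_all only: inverse_eq_divide)?)
      apply ((simp_all add: field_simps)?)
      apply ((use KL1 K_w in algebra)+)?
      apply ((simp add: power2_eq_square algebra_simps)+)?
      done
  next
    assume i: "i = Suc (Suc (Suc (Suc (Suc (0)))))"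
    show ?thesis
      unfolding i res_eq QU_eq Qm_eq Qg_eq Qd_eq Qb_eq
      apply (simp only: nth_Cons_0 nth_Cons_Suc)
      apply (simp add: eqs)
      apply ((rule jet1_final)?)
      apply ((rule jet_rules)+)?
      apply ((simp_all add: K0 e1 e1x e1xx)?)
      apply ((simp_all only: s_w c_w sq_w)?)
      apply ((simp_all only: nu_w divide_inverse inverse_mult_distrib KL)?)
      apply ((simp_all only: inverse_eq_divide)?)
      apply ((simp_all add: field_simps)?)
      apply ((use KL1 K_w in algebra)+)?
      apply ((simp add: power2_eq_square algebra_simps)+)?
      done
  next
    assume i: "i = Suc (Suc (Suc (Suc (Suc (Suc (0))))))"
    show ?thesis
      unfolding i res_eq QU_eq Qm_eq Qg_eq Qd_eq Qb_eq
      apply (simp only: nth_Cons_0 nth_Cons_Suc)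
      apply (simp add: eqs)
      apply ((rule jet1_final)?)
      apply ((rule jet_rules)+)?
      apply ((simp_all add: K0 e1 e1x e1xx)?)
      apply ((simp_all only: s_w c_w sq_w)?)
      apply ((simp_all only: nu_w divide_inverse inverse_mult_distrib KL)?)
      apply ((simp_all only: inverse_eq_divide)?)
      apply ((simp_all add: field_simps)?)
      apply ((use KL1 K_w in algebra)+)?
      apply ((simp add: power2_eq_square algebra_simps)+)?
      done
  next
    assume i: "i = Suc (Suc (Suc (Suc (Suc (Suc (Suc (0)))))))"
    show ?thesis
      unfolding i res_eq QU_eq Qm_eq Qg_eq Qd_eq Qb_eq
      apply (simp only: nth_Cons_0 nth_Cons_Suc)
      apply (simp add: eqs)
      apply ((rule jet1_final)?)
      apply ((rule jet_rules)+)?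
      apply ((simp_all add: K0 e1 e1x e1xx)?)
      apply ((simp_all only: s_w c_w sq_w)?)
      apply ((simp_all only: nu_w divide_inverse inverse_mult_distrib KL)?)
      apply ((simp_all only: inverse_eq_divide)?)
      apply ((simp_all add: field_simps)?)
      apply ((use KL1 K_w in algebra)+)?
      apply ((simp add: power2_eq_square algebra_simps)+)?
      done
  qed
qed

end
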